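(* Let $S$ be an investment strategy with parameter space $\mathbb W=\mathcal W_k^\ell$ ($k\ge2$, $\ell\ge1$) on a market with $m$ assets. Fix $\varepsilon\in(0,1)$ and suppose $S$ satisfies condition $(\mathrm L_\varepsilon)$ and condition $(\mathrm D_c)$ for some constant $c>0$. Then $\mathcal U(S)$ is a universalization of $S$.
   Context: Let $m\ge2$. A market sequence is a sequence of return vectors $\mathbf x_0,\mathbf x_1,\dots\in(0,\infty)^m$. For $k\ge2$ let $\mathcal W_k=\{\mathbf w\in[0,1]^k:\sum_{i=1}^k w_i=1\}$. An investment strategy $S$ with parameter space $\mathbb W=\mathcal W_k^\ell$ (elements written $\mathbf w=(\mathbf w_1,\dots,\mathbf w_\ell)$, $\mathbf w_\iota=(w_{\iota1},\dots,w_{\iota k})$) assigns to every day $t\ge0$ and $\mathbf w\in\mathbb W$ an investment description $S_t(\mathbf w)=(S_{t1}(\mathbf w),\dots,S_{tm}(\mathbf w))\in\mathcal W_m$ (it may depend on market data observed before day $t$), measurable in $\mathbf w$. Its cumulative return is $\mathcal R_n(\mathbf w)=\mathcal R_n(S(\mathbf w))=\prod_{t=0}^{n-1}S_t(\mathbf w)\cdot\mathbf x_t$ (with $\mathcal R_0\equiv1$), and $\mathcal L_n(S(\mathbf w))=\frac1n\log\mathcal R_n(\mathbf w)$. For a parameter-free strategy $U$ with descriptions $U_t\in\mathcal W_m$, $\mathcal R_n(U)=\prod_{t=0}^{n-1}U_t\cdot\mathbf x_t$ and $\mathcal L_n(U)=\frac1n\log\mathcal R_n(U)$. $\mu$ denotes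 the uniform probability measure on $\mathbb W$ (normalized product of $(k-1)$-dimensional Lebesgue measure on each factor $\mathcal W_k$). The universalization $\mathcal U(S)$ is the parameter-free strategy with $\mathcal U_t(S)=\dfrac{\int_{\mathbb W}S_t(\mathbf w)\mathcal R_t(\mathbf w)\,d\mu(\mathbf w)}{\int_{\mathbb W}\mathcal R_t(\mathbf w)\,d\mu(\mathbf w)}$. A parameter-free strategy $U$ is a universalization of $S$ if there is a sequence $\eta_n\to0$, not depending on the market data, such that $\mathcal L_n(U)\ge\sup_{\mathbf w\in\mathbb W}\mathcal L_n(S(\mathbf w))-\eta_n$ for all $n\ge1$ and all market sequences. Condition $(\mathrm L_\varepsilon)$: $S_{ti}(\mathbf w)\ge\frac{\varepsilon}{2m(t+1)^2}$ for all $t\ge0$, $1\le i\le m$, $\mathbf w\in\mathbb W$. Condition $(\mathrm D_c)$: for all $t\ge0$, $1\le i\le m$ and $\mathbf w,\mathbf w'\in\mathbb W$, $|S_{ti}(\mathbf w)-S_{ti}(\mathbf w')|\le c(t+1)\sum_{\iota=1}^\ell\sum_{j=1}^{k-1}|w_{\iota j}-w'_{\iota j}|$ (this holds in particular if each $S_{ti}$ is differentiable in the free coordinates $w_{\iota j}$, $j\le k-1$, where $w_{\iota k}=1-\sum_{j<k}w_{\iota j}$, with all partial derivatives bounded in absolute value by $c(t+1)$). *)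

theory Defs
  imports "HOL-Analysis.Analysis"
begin

text \<open>Assets are indexed by i < m, days by t :: nat.
A market sequence is x :: nat => nat => real, x t i being the return of asset i on day t.
A parameter w in W = W_k^l is a function w :: nat => nat => real with w iota j the j-th
coordinate of the iota-th simplex factor (iota < l, j < k), extended by 0 outside the index range.
A strategy is S :: nat => market => parameter => nat => real, S t x w i = S_{ti}(w) on market x.\<close>

definition market :: "nat \<Rightarrow> (nat \<Rightarrow> nat \<Rightarrow> real) \<Rightarrow> bool" where
  "market m x \<longleftrightarrow> (\<forall>t. \<forall>i<m. x t i > 0)"

definition Wpar :: "nat \<Rightarrow> nat \<Rightarrow> (nat \<Rightarrow> nat \<Rightarrow> real) set" where
  "Wpar k l = {w. (\<forall>\<iota> j. \<not> (\<iota> < l \<and> j < k) \<longrightarrow> w \<iota> j = 0) \<and>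
      (\<forall>\<iota><l. (\<forall>j<k. 0 \<le> w \<iota> j \<and> w \<iota> j \<le> 1) \<and> (\<Sum>j<k. w \<iota> j) = 1)}"

text \<open>Free coordinates (w_{iota j}, j < k-1) and the map back to the parameter space.\<close>
definition free_space :: "nat \<Rightarrow> nat \<Rightarrow> (nat \<times> nat \<Rightarrow> real) measure" where
  "free_space k l = PiM ({..<l} \<times> {..<k-1}) (\<lambda>_. lborel)"

definition free_simplex :: "nat \<Rightarrow> nat \<Rightarrow> (nat \<times> nat \<Rightarrow> real) set" where
  "free_simplex k l = {v \<in> space (free_space k l).
      \<forall>\<iota><l. (\<forall>j<k-1. 0 \<le> v (\<iota>, j)) \<and> (\<Sum>j<k-1. v (\<iota>, j)) \<le> 1}"

definition free_lift :: "nat \<Rightarrow> nat \<Rightarrow> (nat \<times> nat \<Rightarrow> real) \<Rightarrow> nat \<Rightarrow> nat \<Rightarrow> real" where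
  "free_lift k l v = (\<lambda>\<iota> j. if \<iota> < l \<and> j < k - 1 then v (\<iota>, j)
       else if \<iota> < l \<and> j = k - 1 then 1 - (\<Sum>j'<k-1. v (\<iota>, j')) else 0)"

text \<open>The uniform probability measure mu on W, represented on the free coordinates:
normalized Lebesgue measure on the product of the projected simplices.\<close>
definition mu_free :: "nat \<Rightarrow> nat \<Rightarrow> (nat \<times> nat \<Rightarrow> real) measure" where
  "mu_free k l = uniform_measure (free_space k l) (free_simplex k l)"

definition W_integral :: "nat \<Rightarrow> nat \<Rightarrow> ((nat \<Rightarrow> nat \<Rightarrow> real) \<Rightarrow> real) \<Rightarrow> real" where
  "W_integral k l f = (\<integral>v. f (free_lift k l v) \<partial>mu_free k l)"

definition strategy ::
  "nat \<Rightarrow> nat \<Rightarrow> nat \<Rightarrow> (nat \<Rightarrow> (nat \<Rightarrow> nat \<Rightarrow> real) \<Rightarrow> (nat \<Rightarrow> nat \<Rightarrow> real) \<Rightarrow> nat \<Rightarrow> real) \<Rightarrow> bool"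
  where
  "strategy m k l S \<longleftrightarrow>
     (\<forall>t x w. market m x \<and> w \<in> Wpar k l \<longrightarrow>
        (\<forall>i<m. 0 \<le> S t x w i) \<and> (\<Sum>i<m. S t x w i) = 1) \<and>
     (\<forall>t x x' w. market m x \<and> market m x' \<and> w \<in> Wpar k l \<and> (\<forall>s<t. \<forall>i<m. x s i = x' s i)
        \<longrightarrow> (\<forall>i<m. S t x w i = S t x' w i)) \<and>
     (\<forall>t x i. market m x \<and> i < m \<longrightarrow>
        (\<lambda>v. S t x (free_lift k l v) i) \<in> borel_measurable (free_space k l))"

definition ret ::
  "nat \<Rightarrow> (nat \<Rightarrow> (nat \<Rightarrow> nat \<Rightarrow> real) \<Rightarrow> (nat \<Rightarrow> nat \<Rightarrow> real) \<Rightarrow> nat \<Rightarrow> real)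
     \<Rightarrow> (nat \<Rightarrow> nat \<Rightarrow> real) \<Rightarrow> (nat \<Rightarrow> nat \<Rightarrow> real) \<Rightarrow> nat \<Rightarrow> real" where
  "ret m S x w n = (\<Prod>t<n. \<Sum>i<m. S t x w i * x t i)"

text \<open>Parameter-free strategy U: U x t i is U_{ti} on market x.\<close>
definition ret_pf ::
  "nat \<Rightarrow> ((nat \<Rightarrow> nat \<Rightarrow> real) \<Rightarrow> nat \<Rightarrow> nat \<Rightarrow> real) \<Rightarrow> (nat \<Rightarrow> nat \<Rightarrow> real) \<Rightarrow> nat \<Rightarrow> real" where
  "ret_pf m U x n = (\<Prod>t<n. \<Sum>i<m. U x t i * x t i)"

definition universal ::
  "nat \<Rightarrow> nat \<Rightarrow> nat \<Rightarrow> (nat \<Rightarrow> (nat \<Rightarrow> nat \<Rightarrow> real) \<Rightarrow> (nat \<Rightarrow> nat \<Rightarrow> real) \<Rightarrow> nat \<Rightarrow> real)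
     \<Rightarrow> (nat \<Rightarrow> nat \<Rightarrow> real) \<Rightarrow> nat \<Rightarrow> nat \<Rightarrow> real" where
  "universal m k l S x t i =
     W_integral k l (\<lambda>w. S t x w i * ret m S x w t) / W_integral k l (\<lambda>w. ret m S x w t)"

definition is_universalization ::
  "nat \<Rightarrow> nat \<Rightarrow> nat \<Rightarrow> (nat \<Rightarrow> (nat \<Rightarrow> nat \<Rightarrow> real) \<Rightarrow> (nat \<Rightarrow> nat \<Rightarrow> real) \<Rightarrow> nat \<Rightarrow> real)
     \<Rightarrow> ((nat \<Rightarrow> nat \<Rightarrow> real) \<Rightarrow> nat \<Rightarrow> nat \<Rightarrow> real) \<Rightarrow> bool" where
  "is_universalization m k l S U \<longleftrightarrow>
     (\<exists>\<eta> :: nat \<Rightarrow> real. \<eta> \<longlonglongrightarrow> 0 \<and>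
        (\<forall>n\<ge>1. \<forall>x. market m x \<longrightarrow>
           ln (ret_pf m U x n) / real n \<ge>
             (SUP w\<in>Wpar k l. ln (ret m S x w n) / real n) - \<eta> n))"

definition cond_L ::
  "nat \<Rightarrow> nat \<Rightarrow> nat \<Rightarrow> real \<Rightarrow> (nat \<Rightarrow> (nat \<Rightarrow> nat \<Rightarrow> real) \<Rightarrow> (nat \<Rightarrow> nat \<Rightarrow> real) \<Rightarrow> nat \<Rightarrow> real) \<Rightarrow> bool" where
  "cond_L m k l \<epsilon> S \<longleftrightarrow> (\<forall>t x w i. market m x \<and> w \<in> Wpar k l \<and> i < m \<longrightarrow>
      S t x w i \<ge> \<epsilon> / (2 * real m * (real t + 1)^2))"

definition cond_D ::
  "nat \<Rightarrow> nat \<Rightarrow> nat \<Rightarrow> real \<Rightarrow> (nat \<Rightarrow> (nat \<Rightarrow> nat \<Rightarrow> real) \<Rightarrow> (nat \<Rightarrow> nat \<Rightarrow> real) \<Rightarrow> nat \<Rightarrow> real) \<Rightarrow> bool" where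
  "cond_D m k l c S \<longleftrightarrow> (\<forall>t x w w' i. market m x \<and> w \<in> Wpar k l \<and> w' \<in> Wpar k l \<and> i < m \<longrightarrow>
      \<bar>S t x w i - S t x w' i\<bar> \<le> c * (real t + 1) * (\<Sum>\<iota><l. \<Sum>j<k-1. \<bar>w \<iota> j - w' \<iota> j\<bar>))"

end

theory Submission
  imports Defs "HOL-Probability.Probability_Measure" "HOL-Real_Asymp.Real_Asymp"
begin

lemma free_simplex_sets: "free_simplex k l \<in> sets (free_space k l)"
  unfolding free_simplex_def free_space_def
  by measurable

lemma box_emeasure:
  assumes "finite I" "\<And>i. i \<in> I \<Longrightarrow> a i \<le> b i"
  shows "emeasure (PiM I (\<lambda>_. lborel)) (PiE I (\<lambda>i. {a i..b i})) = (\<Prod>i\<in>I. ennreal (b i - a i))"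
proof -
  interpret product_sigma_finite "\<lambda>_. lborel" by standard
  show ?thesis using assms by (simp add: emeasure_PiM)
qed

lemma free_simplex_sub: "free_simplex k l \<subseteq> PiE ({..<l} \<times> {..<k-1}) (\<lambda>_. {0..1})"
proof
  fix v assume v: "v \<in> free_simplex k l"
  then have sp: "v \<in> PiE ({..<l} \<times> {..<k-1}) (\<lambda>_. UNIV)"
    by (simp add: free_simplex_def free_space_def space_PiM)
  show "v \<in> PiE ({..<l} \<times> {..<k-1}) (\<lambda>_. {0..1})"
  proof (rule PiE_I)
    fix p assume p: "p \<in> {..<l} \<times> {..<k-1}"
    obtain i j where ij: "p = (i,j)" "i < l" "j < k-1" using p by auto
    have nn: "\<forall>j'<k-1. 0 \<le> v (i, j')" and s: "(\<Sum>j'<k-1. v (i, j')) \<le> 1"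
      using v ij by (auto simp: free_simplex_def)
    have "v (i,j) \<le> (\<Sum>j'<k-1. v (i, j'))"
      using nn ij by (intro member_le_sum) auto
    then show "v p \<in> {0..1}" using s nn ij by auto
  next
    fix p assume "p \<notin> {..<l} \<times> {..<k-1}"
    then show "v p = undefined" using sp by (cases p) (auto simp: PiE_def extensional_def)
  qed
qed

lemma free_simplex_le1: "emeasure (free_space k l) (free_simplex k l) \<le> 1"
proof -
  have "emeasure (free_space k l) (free_simplex k l) \<le> emeasure (free_space k l) (PiE ({..<l} \<times> {..<k-1}) (\<lambda>_. {0..1}))"
    apply (rule emeasure_mono[OF free_simplex_sub])
    unfolding free_space_def by measurable
  also have "\<dots> = 1" unfolding free_space_def
    by (subst box_emeasure[where a="\<lambda>_. 0" and b="\<lambda>_. 1", simplified]) auto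
  finally show ?thesis .
qed

lemma free_lift_W:
  assumes "v \<in> free_simplex k l" "k \<ge> 2"
  shows "free_lift k l v \<in> Wpar k l"
proof -
  have nn: "\<And>i j. i < l \<Longrightarrow> j < k - 1 \<Longrightarrow> 0 \<le> v (i,j)"
   and s: "\<And>i. i < l \<Longrightarrow> (\<Sum>j'<k-1. v (i, j')) \<le> 1"
    using assms by (auto simp: free_simplex_def)
  have le: "\<And>i j. i < l \<Longrightarrow> j < k - 1 \<Longrightarrow> v (i,j) \<le> (\<Sum>j'<k-1. v (i, j'))"
    using nn by (intro member_le_sum) auto
  have k: "k = Suc (k-1)" using assms by simp
  have A: "\<And>i j. \<not> (i < l \<and> j < k) \<Longrightarrow> free_lift k l v i j = 0"
    unfolding free_lift_def using assms by auto
  have B: "0 \<le> free_lift k l v i j \<and> free_lift k l v i j \<le> 1" if i: "i < l" and j: "j < k" for i j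
  proof (cases "j < k - 1")
    case True then show ?thesis using nn[OF i True] le[OF i True] s[OF i] i
      unfolding free_lift_def by auto
  next
    case False
    then have "j = k - 1" using j by auto
    moreover have "0 \<le> (\<Sum>j'<k-1. v (i, j'))" using nn[OF i] by (intro sum_nonneg) auto
    ultimately show ?thesis using s[OF i] i unfolding free_lift_def by auto
  qed
  have C: "(\<Sum>j<k. free_lift k l v i j) = 1" if i: "i < l" for i
  proof -
    have "(\<Sum>j<k. free_lift k l v i j) = (\<Sum>j<k-1. free_lift k l v i j) + free_lift k l v i (k-1)"
      by (subst k) (simp only: sum.lessThan_Suc)
    also have "\<dots> = 1" using i unfolding free_lift_def by simp
    finally show ?thesis .
  qed
  show ?thesis unfolding Wpar_def using A B C by blast
qed

definition box :: "nat \<Rightarrow> nat \<Rightarrow> real \<Rightarrow> (nat \<Rightarrow> nat \<Rightarrow> real) \<Rightarrow> (nat \<times> nat \<Rightarrow> real) set" where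
  "box k l \<theta> w = PiE ({..<l} \<times> {..<k-1})
     (\<lambda>p. {(1-\<theta>) * w (fst p) (snd p) .. (1-\<theta>) * w (fst p) (snd p) + \<theta> / real k})"

lemma box_sub:
  assumes "k \<ge> 2" "0 < \<theta>" "\<theta> \<le> 1"
    and w: "\<And>i j. i < l \<Longrightarrow> j < k - 1 \<Longrightarrow> 0 \<le> w i j"
    and ws: "\<And>i. i < l \<Longrightarrow> (\<Sum>j<k-1. w i j) \<le> 1"
  shows "box k l \<theta> w \<subseteq> free_simplex k l"
proof
  fix v assume v: "v \<in> box k l \<theta> w"
  have iv: "(1-\<theta>) * w i j \<le> v (i,j) \<and> v (i,j) \<le> (1-\<theta>) * w i j + \<theta> / real k"
    if "i < l" "j < k - 1" for i j
    using v that unfolding box_def by (auto simp: PiE_iff)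
  have sp: "v \<in> space (free_space k l)"
    using v unfolding box_def free_space_def by (auto simp: space_PiM PiE_iff)
  have "0 \<le> v (i,j)" if "i < l" "j < k - 1" for i j
    using iv[OF that] w[OF that] assms(3) by (smt (verit) mult_nonneg_nonneg)
  moreover have "(\<Sum>j<k-1. v (i, j)) \<le> 1" if i: "i < l" for i
  proof -
    have "(\<Sum>j<k-1. v (i, j)) \<le> (\<Sum>j<k-1. (1-\<theta>) * w i j + \<theta> / real k)"
      using iv[OF i] by (intro sum_mono) auto
    also have "\<dots> = (1-\<theta>) * (\<Sum>j<k-1. w i j) + real (k-1) * (\<theta> / real k)"
      by (simp add: sum.distrib sum_distrib_left)
    also have "\<dots> \<le> (1-\<theta>) * 1 + \<theta>"
    proof (rule add_mono)
      show "(1-\<theta>) * (\<Sum>j<k-1. w i j) \<le> (1-\<theta>) * 1"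
        using ws[OF i] assms(3) by (intro mult_left_mono) auto
      have "real (k-1) \<le> real k" by simp
      then have "real (k-1) * \<theta> \<le> real k * \<theta>" using assms(2) by (intro mult_right_mono) auto
      then show "real (k-1) * (\<theta> / real k) \<le> \<theta>" using assms(1)
        by (simp add: field_simps)
    qed
    finally show ?thesis by simp
  qed
  ultimately show "v \<in> free_simplex k l" using sp unfolding free_simplex_def by auto
qed

lemma box_close:
  assumes "v \<in> box k l \<theta> w" "i < l" "j < k - 1" "0 \<le> w i j" "w i j \<le> 1" "0 < \<theta>" "k \<ge> 2"
  shows "\<bar>v (i,j) - w i j\<bar> \<le> 2 * \<theta>"
proof -
  have iv: "(1-\<theta>) * w i j \<le> v (i,j) \<and> v (i,j) \<le> (1-\<theta>) * w i j + \<theta> / real k"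
    using assms unfolding box_def by (auto simp: PiE_iff)
  have "\<theta> / real k \<le> \<theta>" using assms by (simp add: divide_le_eq)
  moreover have "\<theta> * w i j \<le> \<theta>" using assms by (simp add: mult_le_cancel_left1)
  moreover have "0 \<le> \<theta> * w i j" using assms by simp
  ultimately show ?thesis using iv by (auto simp: algebra_simps abs_le_iff)
qed

lemma box_sets: "box k l \<theta> w \<in> sets (free_space k l)"
  unfolding box_def free_space_def by (rule sets_PiM_I_finite) auto

lemma box_emeasure':
  assumes "0 \<le> \<theta>"
  shows "emeasure (free_space k l) (box k l \<theta> w) = ennreal ((\<theta> / real k) ^ (l * (k-1)))"
proof -
  have "emeasure (free_space k l) (box k l \<theta> w) = (\<Prod>p\<in>{..<l} \<times> {..<k-1}. ennreal (\<theta> / real k))"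
    unfolding box_def free_space_def
    by (subst box_emeasure) (use assms in auto)
  also have "\<dots> = ennreal ((\<theta> / real k) ^ (l * (k-1)))"
    using assms by (simp add: ennreal_power card_cartesian_product)
  finally show ?thesis .
qed

lemma box_measure:
  assumes "0 \<le> \<theta>"
  shows "measure (free_space k l) (box k l \<theta> w) = (\<theta> / real k) ^ (l * (k-1))"
  using box_emeasure'[OF assms] assms by (intro measure_eq_emeasure_eq_ennreal) auto

lemma simplex_pos:
  assumes "k \<ge> 2"
  shows "emeasure (free_space k l) (free_simplex k l) > 0"
proof -
  have "box k l 1 (\<lambda>_ _. 0) \<subseteq> free_simplex k l"
    using assms by (intro box_sub) auto
  then have "emeasure (free_space k l) (box k l 1 (\<lambda>_ _. 0)) \<le> emeasure (free_space k l) (free_simplex k l)"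
    by (intro emeasure_mono free_simplex_sets)
  moreover have "emeasure (free_space k l) (box k l 1 (\<lambda>_ _. 0)) > 0"
    using assms by (subst box_emeasure') auto
  ultimately show ?thesis by order
qed

lemma mu_prob: "k \<ge> 2 \<Longrightarrow> prob_space (mu_free k l)"
  unfolding mu_free_def
  using simplex_pos[of k l] free_simplex_le1[of k l]
  by (intro prob_space_uniform_measure) (auto, metis ennreal_one_neq_top top_unique)

lemma AE_mu: "(\<And>v. v \<in> free_simplex k l \<Longrightarrow> P v) \<Longrightarrow> AE v in mu_free k l. P v"
  unfolding mu_free_def by (intro AE_uniform_measureI free_simplex_sets) auto

lemma integrable_mu:
  fixes f :: "_ \<Rightarrow> real"
  assumes "k \<ge> 2" "f \<in> borel_measurable (free_space k l)"
    "\<And>v. v \<in> free_simplex k l \<Longrightarrow> \<bar>f v\<bar> \<le> B"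
  shows "integrable (mu_free k l) f"
proof -
  interpret prob_space "mu_free k l" by (rule mu_prob[OF assms(1)])
  show ?thesis
    by (rule integrable_const_bound[where B=B]) (use assms AE_mu in \<open>auto simp: mu_free_def\<close>)
qed

lemma measure_mu_box:
  assumes "k \<ge> 2" "B \<in> sets (free_space k l)" "B \<subseteq> free_simplex k l"
  shows "measure (mu_free k l) B \<ge> measure (free_space k l) B"
proof -
  have fin: "emeasure (free_space k l) (free_simplex k l) \<noteq> \<infinity>"
    using le_less_trans[OF free_simplex_le1[of k l] ennreal_one_less_top] by simp
  have pos: "emeasure (free_space k l) (free_simplex k l) \<noteq> 0"
    using simplex_pos[OF assms(1), of l] by auto
  have m: "measure (mu_free k l) B = measure (free_space k l) B / measure (free_space k l) (free_simplex k l)"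
    unfolding mu_free_def using assms fin pos by (simp add: Int_absorb1)
  have "measure (free_space k l) (free_simplex k l) \<le> 1"
    using free_simplex_le1 fin by (simp add: measure_def enn2real_leI)
  moreover have "measure (free_space k l) (free_simplex k l) > 0"
    using fin pos by (simp add: emeasure_eq_ennreal_measure measure_nonneg order_less_le)
  ultimately show ?thesis unfolding m
    by (simp add: le_divide_eq measure_nonneg mult_left_le)
qed

lemma S_basic:
  assumes "strategy m k l S" "market m x" "w \<in> Wpar k l" "i < m"
  shows "0 \<le> S t x w i" "S t x w i \<le> 1"
proof -
  have nn: "\<forall>i<m. 0 \<le> S t x w i" and s: "(\<Sum>i<m. S t x w i) = 1"
    using assms unfolding strategy_def by blast+
  show "0 \<le> S t x w i" using nn assms by auto
  have "S t x w i \<le> (\<Sum>i<m. S t x w i)" using nn assms by (intro member_le_sum) auto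
  then show "S t x w i \<le> 1" using s by simp
qed

lemma ret_upper:
  assumes "strategy m k l S" "market m x" "w \<in> Wpar k l"
  shows "ret m S x w t \<le> (\<Prod>s<t. \<Sum>i<m. x s i)"
  unfolding ret_def
proof (rule prod_mono, intro conjI)
  fix s assume "s \<in> {..<t}"
  show "0 \<le> (\<Sum>i<m. S s x w i * x s i)"
    using S_basic[OF assms] assms(2) by (intro sum_nonneg) (auto simp: market_def less_imp_le)
  show "(\<Sum>i<m. S s x w i * x s i) \<le> (\<Sum>i<m. x s i)"
    using S_basic[OF assms] assms(2) by (intro sum_mono) (auto simp: market_def mult_left_le_one_le less_imp_le)
qed

lemma ret_lower:
  assumes "strategy m k l S" "market m x" "w \<in> Wpar k l" "cond_L m k l \<epsilon> S" "m \<ge> 1" "0 < \<epsilon>"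
  shows "ret m S x w t \<ge> (\<Prod>s<t. \<epsilon> / (2 * real m * (real s + 1)^2) * x s 0)"
  unfolding ret_def
proof (rule prod_mono, intro conjI)
  fix s assume "s \<in> {..<t}"
  have L: "S s x w 0 \<ge> \<epsilon> / (2 * real m * (real s + 1)^2)"
    using assms unfolding cond_L_def by auto
  have x0: "x s 0 > 0" using assms unfolding market_def by auto
  have "\<epsilon> / (2 * real m * (real s + 1)^2) * x s 0 \<le> S s x w 0 * x s 0"
    using L x0 by (intro mult_right_mono) auto
  also have "\<dots> \<le> (\<Sum>i<m. S s x w i * x s i)"
    using S_basic[OF assms(1-3)] assms(2,5)
    by (intro member_le_sum) (auto simp: market_def less_imp_le)
  finally show "\<epsilon> / (2 * real m * (real s + 1)^2) * x s 0 \<le> (\<Sum>i<m. S s x w i * x s i)" .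
  show "0 \<le> \<epsilon> / (2 * real m * (real s + 1)^2) * x s 0" using x0 assms(6) by simp
qed

lemma lowprod_pos:
  assumes "market m x" "m \<ge> 1" "0 < \<epsilon>"
  shows "(\<Prod>s<t. \<epsilon> / (2 * real m * (real s + 1)^2) * x s 0) > 0"
  using assms unfolding market_def by (intro prod_pos) (auto intro!: mult_pos_pos divide_pos_pos)

lemma ret_meas:
  assumes "strategy m k l S" "market m x"
  shows "(\<lambda>v. ret m S x (free_lift k l v) t) \<in> borel_measurable (free_space k l)"
    "i < m \<Longrightarrow> (\<lambda>v. S t x (free_lift k l v) i) \<in> borel_measurable (free_space k l)"
proof -
  have M: "\<And>s i. i < m \<Longrightarrow> (\<lambda>v. S s x (free_lift k l v) i) \<in> borel_measurable (free_space k l)"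
    using assms unfolding strategy_def by blast
  then show "i < m \<Longrightarrow> (\<lambda>v. S t x (free_lift k l v) i) \<in> borel_measurable (free_space k l)" .
  show "(\<lambda>v. ret m S x (free_lift k l v) t) \<in> borel_measurable (free_space k l)"
    unfolding ret_def using M
    by (intro borel_measurable_prod borel_measurable_sum borel_measurable_times) auto
qed

lemma main_bound:
  fixes m k l :: nat and \<epsilon> c :: real
    and S :: "nat \<Rightarrow> (nat \<Rightarrow> nat \<Rightarrow> real) \<Rightarrow> (nat \<Rightarrow> nat \<Rightarrow> real) \<Rightarrow> nat \<Rightarrow> real"
  assumes m2: "m \<ge> 2" and k2: "k \<ge> 2" and l1: "l \<ge> 1"
    and strat: "strategy m k l S"
    and eps: "0 < \<epsilon>" "\<epsilon> < 1"
    and cL: "cond_L m k l \<epsilon> S"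
    and "0 < c" and cD: "cond_D m k l c S"
    and n1: "n \<ge> 1" and mx: "market m x"
  shows "ln (ret_pf m (universal m k l S) x n) / real n \<ge>
     (SUP w\<in>Wpar k l. ln (ret m S x w n) / real n) -
     (1 + ln 2 - real (l * (k - 1)) * ln (\<epsilon> / (8 * real m * max c 1 * real (l * (k - 1)) * real n ^ 4) / real k)) / real n"
proof -
  define N where "N = l * (k - 1)"
  define c' where "c' = max c 1"
  define \<theta> where "\<theta> = \<epsilon> / (8 * real m * c' * real N * real n ^ 4)"
  have c'1: "c' \<ge> 1" and cc': "c \<le> c'" unfolding c'_def by auto
  have N1: "N \<ge> 1" unfolding N_def using k2 l1 by simp
  define R where "R t v = ret m S x (free_lift k l v) t" for t v
  define I where "I t = W_integral k l (\<lambda>w. ret m S x w t)" for t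
  interpret P: prob_space "mu_free k l" by (rule mu_prob[OF k2])
  have Ieq: "I t = (\<integral>v. R t v \<partial>mu_free k l)" for t unfolding I_def W_integral_def R_def ..
  have Rm: "R t \<in> borel_measurable (free_space k l)" for t
    unfolding R_def using ret_meas(1)[OF strat mx] by (simp add: fun_eq_iff[symmetric])
  have Sm: "(\<lambda>v. S t x (free_lift k l v) i) \<in> borel_measurable (free_space k l)" if "i < m" for t i
    using ret_meas(2)[OF strat mx that] .
  have inW: "free_lift k l v \<in> Wpar k l" if "v \<in> free_simplex k l" for v
    using free_lift_W[OF that k2] .
  define p where "p t = (\<Prod>s<t. \<epsilon> / (2 * real m * (real s + 1)^2) * x s 0)" for t
  define q where "q t = (\<Prod>s<t. \<Sum>i<m. x s i)" for t
  have ppos: "p t > 0" for t unfolding p_def using lowprod_pos[OF mx _ eps(1)] m2 by simp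
  have Rlow: "p t \<le> R t v" if "v \<in> free_simplex k l" for t v
    unfolding p_def R_def using ret_lower[OF strat mx inW[OF that] cL _ eps(1)] m2 by simp
  have Rup: "R t v \<le> q t" if "v \<in> free_simplex k l" for t v
    unfolding q_def R_def using ret_upper[OF strat mx inW[OF that]] by simp
  have intR: "integrable (mu_free k l) (R t)" for t
    by (rule integrable_mu[OF k2 Rm, where B="q t"])
       (use Rlow Rup ppos in \<open>smt (verit)\<close>)
  have intSR: "integrable (mu_free k l) (\<lambda>v. S t x (free_lift k l v) i * R t v)" if i: "i < m" for t i
  proof (rule integrable_mu[OF k2 _, where B="q t"])
    show "(\<lambda>v. S t x (free_lift k l v) i * R t v) \<in> borel_measurable (free_space k l)"
      using Sm[OF i] Rm by (intro borel_measurable_times) auto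
  next
    fix v assume v: "v \<in> free_simplex k l"
    have "0 \<le> S t x (free_lift k l v) i" "S t x (free_lift k l v) i \<le> 1"
      using S_basic[OF strat mx inW[OF v] i] by auto
    moreover have "0 \<le> R t v" "R t v \<le> q t" using Rlow[OF v, of t] Rup[OF v, of t] ppos[of t] by auto
    ultimately show "\<bar>S t x (free_lift k l v) i * R t v\<bar> \<le> q t"
      by (simp add: abs_mult mult_le_one order_trans[OF mult_left_le_one_le])
  qed
  have Ilow: "I t \<ge> p t" for t
  proof -
    have "(\<integral>v. p t \<partial>mu_free k l) \<le> (\<integral>v. R t v \<partial>mu_free k l)"
      by (rule integral_mono_AE) (auto intro!: intR AE_mu Rlow)
    then show ?thesis unfolding Ieq by (simp add: P.prob_space)
  qed
  have Ipos: "I t > 0" for t using Ilow[of t] ppos[of t] by simp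
  have step: "(\<Sum>i<m. universal m k l S x t i * x t i) = I (Suc t) / I t" for t
  proof -
    have "(\<Sum>i<m. universal m k l S x t i * x t i) =
          (\<Sum>i<m. (\<integral>v. S t x (free_lift k l v) i * R t v \<partial>mu_free k l) * x t i) / I t"
      unfolding universal_def I_def W_integral_def R_def
      by (simp add: sum_divide_distrib)
    also have "(\<Sum>i<m. (\<integral>v. S t x (free_lift k l v) i * R t v \<partial>mu_free k l) * x t i) =
               (\<Sum>i<m. (\<integral>v. S t x (free_lift k l v) i * R t v * x t i \<partial>mu_free k l))"
      by simp
    also have "\<dots> = (\<integral>v. (\<Sum>i<m. S t x (free_lift k l v) i * R t v * x t i) \<partial>mu_free k l)"
      by (rule Bochner_Integration.integral_sum[symmetric]) (auto intro: intSR)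
    also have "\<dots> = (\<integral>v. R (Suc t) v \<partial>mu_free k l)"
      by (rule Bochner_Integration.integral_cong)
         (auto simp: R_def ret_def sum_distrib_left sum_distrib_right ac_simps)
    finally show ?thesis unfolding Ieq by simp
  qed
  have tele: "ret_pf m (universal m k l S) x n' = I n'" for n'
  proof (induction n')
    case 0
    have "R 0 = (\<lambda>v. 1)" by (simp add: R_def ret_def fun_eq_iff)
    then have "I 0 = 1" unfolding Ieq by (simp add: P.prob_space)
    then show ?case by (simp add: ret_pf_def)
  next
    case (Suc n')
    have "ret_pf m (universal m k l S) x (Suc n') = ret_pf m (universal m k l S) x n' * (\<Sum>i<m. universal m k l S x n' i * x n' i)"
      by (simp add: ret_pf_def)
    also have "\<dots> = I (Suc n')" using Suc Ipos[of n'] step[of n'] by simp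
    finally show ?case .
  qed
  have Wne: "Wpar k l \<noteq> {}"
  proof -
    define w0 where "w0 = (\<lambda>\<iota> j. if \<iota> < l \<and> j < k then 1 / real k else (0::real))"
    have "w0 \<in> Wpar k l" unfolding Wpar_def w0_def using k2 by auto
    then show ?thesis by auto
  qed
  have retpos: "0 < ret m S x w t" if w: "w \<in> Wpar k l" for w t
    using ret_lower[OF strat mx w cL _ eps(1), of t] lowprod_pos[OF mx _ eps(1), of t] m2 by simp
  have bdd: "bdd_above ((\<lambda>w. ln (ret m S x w n) / real n) ` Wpar k l)"
  proof (rule bdd_aboveI2)
    fix w assume w: "w \<in> Wpar k l"
    have "ln (ret m S x w n) \<le> ln (q n)"
      using retpos[OF w, of n] ret_upper[OF strat mx w, of n] unfolding q_def by simp
    then show "ln (ret m S x w n) / real n \<le> ln (q n) / real n"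
      by (intro divide_right_mono) auto
  qed
  define sup where "sup = (SUP w\<in>Wpar k l. ln (ret m S x w n) / real n)"
  have "sup - 1 / real n < sup" using n1 by simp
  then have "\<exists>w\<in>Wpar k l. sup - 1 / real n < ln (ret m S x w n) / real n"
    using less_cSUP_iff[OF Wne bdd] unfolding sup_def by blast
  then obtain ws where ws: "ws \<in> Wpar k l" and wsup: "sup - 1 / real n < ln (ret m S x ws n) / real n"
    by blast
  define Rs where "Rs = ret m S x ws n"
  have Rspos: "Rs > 0" unfolding Rs_def using retpos[OF ws] .
  have wsW: "0 \<le> ws i j \<and> ws i j \<le> 1" if "i < l" "j < k" for i j
    using ws that unfolding Wpar_def by auto
  have wss: "(\<Sum>j<k. ws i j) = 1" if "i < l" for i
    using ws that unfolding Wpar_def by auto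
  have one_mult: "\<And>a b::real. 1 \<le> a \<Longrightarrow> 1 \<le> b \<Longrightarrow> 1 \<le> a * b"
    by (metis mult_mono mult_1 zero_le_one order_trans)
  have big: "1 \<le> 8 * real m * c' * real N * real n ^ 4"
    by (intro one_mult) (use m2 c'1 N1 n1 in auto)
  have \<theta>pos: "0 < \<theta>" unfolding \<theta>_def using eps m2 c'1 N1 n1 by simp
  have Xp: "0 < 8 * real m * c' * real N * real n ^ 4" using big by linarith
  have \<theta>le: "\<theta> \<le> 1" unfolding \<theta>_def
    by (simp only: pos_divide_le_eq[OF Xp]) (use big eps in linarith)
  define B where "B = box k l \<theta> ws"
  have wss': "(\<Sum>j<k-1. ws i j) \<le> 1" if i: "i < l" for i
  proof -
    have "(\<Sum>j<k-1. ws i j) \<le> (\<Sum>j<k. ws i j)"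
      by (rule sum_mono2) (use wsW[OF i] in auto)
    then show ?thesis using wss[OF i] by simp
  qed
  have Bsub: "B \<subseteq> free_simplex k l"
    unfolding B_def by (rule box_sub[OF k2 \<theta>pos \<theta>le]) (use wsW wss' in auto)
  have Bclose: "\<bar>free_lift k l v i j - ws i j\<bar> \<le> 2 * \<theta>" if "v \<in> B" "i < l" "j < k - 1" for v i j
  proof -
    have "free_lift k l v i j = v (i, j)" using that unfolding free_lift_def by auto
    then show ?thesis using box_close[of v k l \<theta> ws i j] that wsW[of i j] \<theta>pos k2 unfolding B_def by auto
  qed
  have Rbox: "Rs / 2 \<le> R n v" if v: "v \<in> B" for v
  proof -
    define w where "w = free_lift k l v"
    have w: "w \<in> Wpar k l" unfolding w_def using inW Bsub v by auto
    have d: "(\<Sum>\<iota><l. \<Sum>j<k-1. \<bar>w \<iota> j - ws \<iota> j\<bar>) \<le> 2 * \<theta> * real N"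
    proof -
      have "(\<Sum>\<iota><l. \<Sum>j<k-1. \<bar>w \<iota> j - ws \<iota> j\<bar>) \<le> (\<Sum>\<iota><l. \<Sum>j<k-1. 2 * \<theta>)"
        by (intro sum_mono) (use Bclose v in \<open>auto simp: w_def\<close>)
      also have "\<dots> = 2 * \<theta> * real N" unfolding N_def by simp
      finally show ?thesis .
    qed
    have Sb: "S t x w i \<ge> (1 - 1 / (2 * real n)) * S t x ws i" if t: "t < n" and i: "i < m" for t i
    proof -
      have dnn: "0 \<le> (\<Sum>\<iota><l. \<Sum>j<k-1. \<bar>w \<iota> j - ws \<iota> j\<bar>)" by (intro sum_nonneg) auto
      have "\<bar>S t x w i - S t x ws i\<bar> \<le> c * (real t + 1) * (\<Sum>\<iota><l. \<Sum>j<k-1. \<bar>w \<iota> j - ws \<iota> j\<bar>)"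
        using cD mx w ws i unfolding cond_D_def by blast
      also have "\<dots> \<le> c' * real n * (2 * \<theta> * real N)"
        using cc' t d dnn \<open>0 < c\<close> c'1
        by (intro mult_mono) auto
      also have "\<dots> = \<epsilon> / (4 * real m * real n ^ 3)"
        unfolding \<theta>_def using c'1 N1 n1 m2 by (simp add: field_simps power_def)
      finally have A: "S t x w i \<ge> S t x ws i - \<epsilon> / (4 * real m * real n ^ 3)" by simp
      have "S t x ws i \<ge> \<epsilon> / (2 * real m * (real t + 1)^2)"
        using cL mx ws i unfolding cond_L_def by blast
      moreover have "\<epsilon> / (2 * real m * (real t + 1)^2) \<ge> \<epsilon> / (2 * real m * real n ^ 2)"
        using t m2 eps by (intro divide_left_mono mult_left_mono power_mono) auto
      ultimately have Bq: "S t x ws i \<ge> \<epsilon> / (2 * real m * real n ^ 2)" by simp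
      have "\<epsilon> / (4 * real m * real n ^ 3) = (1 / (2 * real n)) * (\<epsilon> / (2 * real m * real n ^ 2))"
        using n1 m2 by (simp add: field_simps power_def)
      also have "\<dots> \<le> (1 / (2 * real n)) * S t x ws i"
        using Bq n1 by (intro mult_left_mono) auto
      finally show ?thesis using A by (simp add: algebra_simps)
    qed
    have sumb: "(\<Sum>i<m. S t x w i * x t i) \<ge> (1 - 1 / (2 * real n)) * (\<Sum>i<m. S t x ws i * x t i)"
      if t: "t < n" for t
      unfolding sum_distrib_left
      using Sb[OF t] mx unfolding market_def
      by (intro sum_mono) (simp add: mult.assoc[symmetric] mult_right_mono less_imp_le)
    have fac: "0 \<le> 1 - 1 / (2 * real n)" using n1 by simp
    have "(1 - 1 / (2 * real n)) ^ n * Rs = (\<Prod>t<n. (1 - 1 / (2 * real n)) * (\<Sum>i<m. S t x ws i * x t i))"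
      unfolding Rs_def ret_def by (simp add: prod.distrib)
    also have "\<dots> \<le> (\<Prod>t<n. \<Sum>i<m. S t x w i * x t i)"
    proof (rule prod_mono, intro conjI)
      fix t assume t: "t \<in> {..<n}"
      show "0 \<le> (1 - 1 / (2 * real n)) * (\<Sum>i<m. S t x ws i * x t i)"
        using fac S_basic[OF strat mx ws] mx unfolding market_def
        by (intro mult_nonneg_nonneg sum_nonneg) (auto simp: less_imp_le)
      show "(1 - 1 / (2 * real n)) * (\<Sum>i<m. S t x ws i * x t i) \<le> (\<Sum>i<m. S t x w i * x t i)"
        using sumb t by auto
    qed
    also have "\<dots> = R n v" unfolding R_def ret_def w_def ..
    finally have X: "(1 - 1 / (2 * real n)) ^ n * Rs \<le> R n v" .
    have "1 + real n * (- 1 / (2 * real n)) \<le> (1 + (- 1 / (2 * real n))) ^ n"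
      by (rule Bernoulli_inequality) (use n1 in \<open>simp add: field_simps\<close>)
    then have "1 / 2 \<le> (1 - 1 / (2 * real n)) ^ n" using n1 by simp
    then have "Rs / 2 \<le> (1 - 1 / (2 * real n)) ^ n * Rs"
      using Rspos by (simp add: mult_right_mono[of "1/2" _ Rs, simplified])
    then show ?thesis using X by simp
  qed
  have measB: "measure (mu_free k l) B \<ge> (\<theta> / real k) ^ N"
    using measure_mu_box[OF k2 box_sets Bsub[unfolded B_def]] box_measure[of \<theta> k l ws] \<theta>pos
    unfolding B_def N_def by simp
  have Bspace: "B \<inter> space (mu_free k l) = B"
    using Bsub unfolding mu_free_def free_simplex_def by auto
  have "(\<integral>v. Rs / 2 * indicator B v \<partial>mu_free k l) \<le> (\<integral>v. R n v \<partial>mu_free k l)"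
  proof (rule integral_mono_AE)
    show "integrable (mu_free k l) (\<lambda>v. Rs / 2 * indicator B v)"
    proof (rule integrable_mu[OF k2 _, where B="Rs/2"])
      show "(\<lambda>v. Rs / 2 * indicator B v) \<in> borel_measurable (free_space k l)"
        using box_sets[of k l \<theta> ws] unfolding B_def by measurable
    qed (use Rspos in \<open>auto simp: indicator_def\<close>)
    show "integrable (mu_free k l) (R n)" by (rule intR)
    show "AE v in mu_free k l. Rs / 2 * indicator B v \<le> R n v"
    proof (rule AE_mu)
      fix v assume v: "v \<in> free_simplex k l"
      have "0 \<le> R n v" using Rlow[OF v, of n] ppos[of n] by linarith
      then show "Rs / 2 * indicator B v \<le> R n v" using Rbox[of v] by (auto simp: indicator_def)
    qed
  qed
  then have "Rs / 2 * measure (mu_free k l) B \<le> I n"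
    unfolding Ieq using Bspace by simp
  moreover have "Rs / 2 * (\<theta> / real k) ^ N \<le> Rs / 2 * measure (mu_free k l) B"
    using measB Rspos by (intro mult_left_mono) auto
  ultimately have Ige: "Rs / 2 * (\<theta> / real k) ^ N \<le> I n" by linarith
  have Lpos: "0 < Rs / 2 * (\<theta> / real k) ^ N" using Rspos \<theta>pos k2 by simp
  have "ln (Rs / 2 * (\<theta> / real k) ^ N) \<le> ln (I n)"
    using Ige Lpos by simp
  moreover have "ln (Rs / 2 * (\<theta> / real k) ^ N) = ln Rs - ln 2 + real N * ln (\<theta> / real k)"
    using Rspos \<theta>pos k2 by (simp add: ln_mult ln_div ln_realpow)
  ultimately have "ln Rs - ln 2 + real N * ln (\<theta> / real k) \<le> ln (I n)" by simp
  then have "(ln Rs - ln 2 + real N * ln (\<theta> / real k)) / real n \<le> ln (I n) / real n"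
    by (intro divide_right_mono) auto
  moreover have "(ln Rs - ln 2 + real N * ln (\<theta> / real k)) / real n =
      ln Rs / real n - (ln 2 - real N * ln (\<theta> / real k)) / real n"
    by (simp add: diff_divide_distrib add_divide_distrib)
  moreover have "sup - (1 + ln 2 - real N * ln (\<theta> / real k)) / real n =
      sup - 1 / real n - (ln 2 - real N * ln (\<theta> / real k)) / real n"
    by (simp add: diff_divide_distrib add_divide_distrib)
  ultimately have "sup - (1 + ln 2 - real N * ln (\<theta> / real k)) / real n \<le> ln (I n) / real n"
    using wsup unfolding Rs_def by linarith
  then show ?thesis unfolding tele sup_def \<theta>_def N_def c'_def by simp
qed

theorem theorem3p1:
  fixes m k l :: nat and \<epsilon> c :: real
    and S :: "nat \<Rightarrow> (nat \<Rightarrow> nat \<Rightarrow> real) \<Rightarrow> (nat \<Rightarrow> nat \<Rightarrow> real) \<Rightarrow> nat \<Rightarrow> real"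
  assumes "m \<ge> 2" and "k \<ge> 2" and "l \<ge> 1"
    and "strategy m k l S"
    and "0 < \<epsilon>" and "\<epsilon> < 1"
    and "cond_L m k l \<epsilon> S"
    and "0 < c" and "cond_D m k l c S"
  shows "is_universalization m k l S (universal m k l S)"
proof -
  note m2 = assms(1) and k2 = assms(2) and l1 = assms(3) and strat = assms(4)
    and eps = assms(5,6) and cL = assms(7) and cD = assms(9)
  define c' where "c' = max c 1"
  define N where "N = l * (k - 1)"
  define D where "D = real N"
  define \<theta> where "\<theta> n = \<epsilon> / (8 * real m * c' * D * real n ^ 4)" for n :: nat
  define \<eta> where "\<eta> n = (1 + ln 2 - real N * ln (\<theta> n / real k)) / real n" for n :: nat
  have c'1: "c' \<ge> 1" and cc': "c \<le> c'" unfolding c'_def by auto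
  have N1: "N \<ge> 1" unfolding N_def using k2 l1 by simp
  have D1: "D \<ge> 1" unfolding D_def using N1 by simp
  have lim: "\<eta> \<longlonglongrightarrow> 0"
  proof -
    define K where "K = \<epsilon> / (8 * real m * c' * D * real k)"
    have K: "K > 0" unfolding K_def using eps m2 k2 c'1 D1 by simp
    have eq: "\<eta> n = (1 + ln 2 - real N * ln K) * (1 / real n) + (4 * real N) * (ln (real n) / real n)"
      if "n \<ge> 1" for n
    proof -
      have "\<theta> n / real k = K / real n ^ 4" unfolding \<theta>_def K_def by (simp add: field_simps)
      then have "ln (\<theta> n / real k) = ln K - 4 * ln (real n)"
        using K that by (simp add: ln_div ln_realpow)
      then show ?thesis unfolding \<eta>_def
        by (simp only:) (simp add: algebra_simps add_divide_distrib diff_divide_distrib)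
    qed
    have "(\<lambda>n. (1 + ln 2 - real N * ln K) * (1 / real n) + (4 * real N) * (ln (real n) / real n)) \<longlonglongrightarrow> 0"
      by (intro tendsto_add_zero tendsto_mult_right_zero) real_asymp+
    then show ?thesis
      by (rule Lim_transform_eventually) (use eq in \<open>auto simp: eventually_sequentially intro!: exI[of _ 1]\<close>)
  qed
  have main: "ln (ret_pf m (universal m k l S) x n) / real n \<ge>
             (SUP w\<in>Wpar k l. ln (ret m S x w n) / real n) - \<eta> n"
    if n1: "n \<ge> 1" and mx: "market m x" for n x
    using main_bound[OF assms(1-9) n1 mx] unfolding \<eta>_def \<theta>_def D_def N_def c'_def by simp
  show ?thesis unfolding is_universalization_def using lim main by blast
qed

end
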